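(* Let $(A_1,\lambda_1)\in\Lambda^*_{2,p}$ and let $(N,\langle\,,\rangle_N)$, $U_{x_1}$, $V_0$ be as in the context. Then the natural group homomorphism $\pi:U_{x_1}\to\mathrm{Aut}(V_0,\langle\,,\rangle)=\mathrm{SL}_2(\mathbb F_{p^2})$ is surjective.
   Context: $k$ is an algebraically closed field of characteristic $p$, $W=W(k)$, $\sigma$ the Frobenius of $W$. $\Lambda^*_{2,p}$ is the set of isomorphism classes of polarized superspecial abelian surfaces $(A_1,\lambda_1)$ over $k$ with $\deg\lambda_1=p^2$ and $\ker\lambda_1\simeq\alpha_p\times\alpha_p$. Let $(M_1,\langle\,,\rangle)$ be the covariant Dieudonné module of $A_1$ with the alternating pairing induced by $\lambda_1$, $N\subset M_1\otimes\mathbb Q$ the Dieudonné module with $VN=M_1$, and $\langle\,,\rangle_N=p\langle\,,\rangle$. $U_{x_1}=\mathrm{Aut}_{\mathcal{DM}}(N,\langle\,,\rangle_N)$ is the group of $W$-linear automorphisms of $N$ commuting with $F,V$ and preserving $\langle\,,\rangle_N$ (it equals $\mathrm{Aut}_{\mathcal{DM}}(M_1,\langle\,,\rangle)$). There is a $W$-basis $e_1,e_2,e_3,e_4$ of $N$ with $Fe_1=e_2$, $Fe_2=-pe_1$, $Fe_3=e_4$, $Fe_4=-pe_3$, $\langle e_1,e_3\rangle_N=-\langle e_3,e_1\rangle_N=1$, $\langle e_2,e_4\rangle_N=-\langle e_4,e_2\rangle_N=p$, and $\langle e_i,e_j\rangle_N=0$ otherwise. Let $\tilde N=\{n\in N:F^2n=-pn\}$,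 the $W(\mathbb F_{p^2})$-span of the $e_i$, and $V_0=\tilde N/V\tilde N=\mathbb F_{p^2}\bar e_1\oplus\mathbb F_{p^2}\bar e_3$, with the non-degenerate alternating pairing $\langle\,,\rangle$ induced by $\langle\,,\rangle_N$. Elements of $U_{x_1}$ preserve $\tilde N$ and $V\tilde N$, giving $\pi$. *)

theory Defs
  imports "HOL-Computational_Algebra.Polynomial"
begin

definition alg_closed_field :: "'k::field itself \<Rightarrow> bool" where
  "alg_closed_field _ \<longleftrightarrow> (\<forall>q :: 'k poly. degree q \<ge> 1 \<longrightarrow> (\<exists>x. poly q x = 0))"

text \<open>W(k) is characterised (up to unique isomorphism) as the strict p-ring with
  residue field k: p is a non-zero-divisor, W is p-adically separated and complete,
  and reduction red : W -> k is a surjective ring homomorphism with kernel pW.\<close>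

definition is_witt_ring :: "nat \<Rightarrow> ('w::comm_ring_1 \<Rightarrow> 'k::field) \<Rightarrow> bool" where
  "is_witt_ring p red \<longleftrightarrow>
     (\<forall>x y. red (x + y) = red x + red y) \<and> (\<forall>x y. red (x * y) = red x * red y) \<and> red 1 = 1 \<and>
     surj red \<and>
     (\<forall>x. red x = 0 \<longleftrightarrow> (\<exists>y. x = of_nat p * y)) \<and>
     (\<forall>x::'w. of_nat p * x = 0 \<longrightarrow> x = 0) \<and>
     (\<forall>x::'w. (\<forall>n. \<exists>y. x = of_nat p ^ n * y) \<longrightarrow> x = 0) \<and>
     (\<forall>a :: nat \<Rightarrow> 'w. (\<forall>n. \<exists>y. a (Suc n) - a n = of_nat p ^ n * y) \<longrightarrow>
        (\<exists>l. \<forall>n. \<exists>y. l - a n = of_nat p ^ n * y))"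

definition is_witt_frobenius :: "nat \<Rightarrow> ('w::comm_ring_1 \<Rightarrow> 'k::field) \<Rightarrow> ('w \<Rightarrow> 'w) \<Rightarrow> bool" where
  "is_witt_frobenius p red \<sigma> \<longleftrightarrow>
     (\<forall>x y. \<sigma> (x + y) = \<sigma> x + \<sigma> y) \<and> (\<forall>x y. \<sigma> (x * y) = \<sigma> x * \<sigma> y) \<and> \<sigma> 1 = 1 \<and>
     (\<forall>x. red (\<sigma> x) = red x ^ p)"

datatype idx = I1 | I2 | I3 | I4

type_synonym 'w vec4 = "idx \<Rightarrow> 'w"
type_synonym 'w mat4 = "idx \<Rightarrow> idx \<Rightarrow> 'w"

definition basis_vec :: "idx \<Rightarrow> 'w::comm_ring_1 vec4" where
  "basis_vec i = (\<lambda>j. if j = i then 1 else 0)"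

definition vsub :: "'w::comm_ring_1 vec4 \<Rightarrow> 'w vec4 \<Rightarrow> 'w vec4" where
  "vsub x y = (\<lambda>i. x i - y i)"

definition mat_vec :: "'w::comm_ring_1 mat4 \<Rightarrow> 'w vec4 \<Rightarrow> 'w vec4" where
  "mat_vec M x = (\<lambda>i. \<Sum>j\<in>{I1,I2,I3,I4}. M i j * x j)"

definition mat_mul :: "'w::comm_ring_1 mat4 \<Rightarrow> 'w mat4 \<Rightarrow> 'w mat4" where
  "mat_mul M M' = (\<lambda>i k. \<Sum>j\<in>{I1,I2,I3,I4}. M i j * M' j k)"

definition mat_id :: "'w::comm_ring_1 mat4" where
  "mat_id = (\<lambda>i j. if i = j then 1 else 0)"

text \<open>F is sigma-semilinear with F e1 = e2, F e2 = -p e1, F e3 = e4, F e4 = -p e3.\<close>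
definition frobF :: "nat \<Rightarrow> ('w::comm_ring_1 \<Rightarrow> 'w) \<Rightarrow> 'w vec4 \<Rightarrow> 'w vec4" where
  "frobF p \<sigma> x = (\<lambda>i. case i of
      I1 \<Rightarrow> - (of_nat p * \<sigma> (x I2))
    | I2 \<Rightarrow> \<sigma> (x I1)
    | I3 \<Rightarrow> - (of_nat p * \<sigma> (x I4))
    | I4 \<Rightarrow> \<sigma> (x I3))"

text \<open>V = p F^{-1}: sigma^{-1}-semilinear with V e1 = -e2, V e2 = p e1, V e3 = -e4, V e4 = p e3.\<close>
definition verV :: "nat \<Rightarrow> ('w::comm_ring_1 \<Rightarrow> 'w) \<Rightarrow> 'w vec4 \<Rightarrow> 'w vec4" where
  "verV p \<sigma> x = (\<lambda>i. case i of
      I1 \<Rightarrow> of_nat p * inv \<sigma> (x I2)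
    | I2 \<Rightarrow> - inv \<sigma> (x I1)
    | I3 \<Rightarrow> of_nat p * inv \<sigma> (x I4)
    | I4 \<Rightarrow> - inv \<sigma> (x I3))"

definition pairN :: "nat \<Rightarrow> 'w::comm_ring_1 vec4 \<Rightarrow> 'w vec4 \<Rightarrow> 'w" where
  "pairN p x y = x I1 * y I3 - x I3 * y I1 + of_nat p * (x I2 * y I4 - x I4 * y I2)"

definition U_grp :: "nat \<Rightarrow> ('w::comm_ring_1 \<Rightarrow> 'w) \<Rightarrow> 'w mat4 set" where
  "U_grp p \<sigma> = {M. (\<exists>M'. mat_mul M M' = mat_id \<and> mat_mul M' M = mat_id) \<and>
      (\<forall>x. mat_vec M (frobF p \<sigma> x) = frobF p \<sigma> (mat_vec M x)) \<and>
      (\<forall>x. mat_vec M (verV p \<sigma> x) = verV p \<sigma> (mat_vec M x)) \<and>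
      (\<forall>x y. pairN p (mat_vec M x) (mat_vec M y) = pairN p x y)}"

definition Ntilde :: "nat \<Rightarrow> ('w::comm_ring_1 \<Rightarrow> 'w) \<Rightarrow> 'w vec4 set" where
  "Ntilde p \<sigma> = {n. frobF p \<sigma> (frobF p \<sigma> n) = (\<lambda>i. - (of_nat p * n i))}"

definition VNtilde :: "nat \<Rightarrow> ('w::comm_ring_1 \<Rightarrow> 'w) \<Rightarrow> 'w vec4 set" where
  "VNtilde p \<sigma> = verV p \<sigma> ` Ntilde p \<sigma>"

text \<open>The class in V0 = Ntilde / V Ntilde of an element y of Ntilde is
  red(y_1) e1bar + red(y_3) e3bar.  pi(M) sends the class of y to the class of M y.
  "pi M has matrix (a b; c d) w.r.t. (e1bar, e3bar)" is expressed as follows.\<close>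
definition pi_has_matrix :: "nat \<Rightarrow> ('w::comm_ring_1 \<Rightarrow> 'w) \<Rightarrow> ('w \<Rightarrow> 'k::field) \<Rightarrow> 'w mat4
    \<Rightarrow> 'k \<Rightarrow> 'k \<Rightarrow> 'k \<Rightarrow> 'k \<Rightarrow> bool" where
  "pi_has_matrix p \<sigma> red M a b c d \<longleftrightarrow>
     (\<exists>y \<in> Ntilde p \<sigma>. vsub (mat_vec M (basis_vec I1)) y \<in> VNtilde p \<sigma> \<and> red (y I1) = a \<and> red (y I3) = c) \<and>
     (\<exists>y \<in> Ntilde p \<sigma>. vsub (mat_vec M (basis_vec I3)) y \<in> VNtilde p \<sigma> \<and> red (y I1) = b \<and> red (y I3) = d)"

definition Fp2 :: "nat \<Rightarrow> 'k::field set" where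
  "Fp2 p = {x. x ^ (p ^ 2) = x}"

text \<open>Aut(V0, <,>): F_{p^2}-linear automorphisms of V0 = F_{p^2} e1bar + F_{p^2} e3bar,
  given by matrices (a b; c d), preserving the induced pairing <u,v> = u1 v3 - u3 v1.\<close>
definition aut_V0 :: "nat \<Rightarrow> 'k::field \<Rightarrow> 'k \<Rightarrow> 'k \<Rightarrow> 'k \<Rightarrow> bool" where
  "aut_V0 p a b c d \<longleftrightarrow> a \<in> Fp2 p \<and> b \<in> Fp2 p \<and> c \<in> Fp2 p \<and> d \<in> Fp2 p \<and>
     a * d - b * c \<noteq> 0 \<and>
     (\<forall>u1 u3 v1 v3. u1 \<in> Fp2 p \<longrightarrow> u3 \<in> Fp2 p \<longrightarrow> v1 \<in> Fp2 p \<longrightarrow> v3 \<in> Fp2 p \<longrightarrow>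
        (a * u1 + b * u3) * (c * v1 + d * v3) - (c * u1 + d * u3) * (a * v1 + b * v3)
          = u1 * v3 - u3 * v1)"

end

theory Submission imports Defs begin

definition mk :: "'w::comm_ring_1 \<Rightarrow> 'w \<Rightarrow> 'w \<Rightarrow> 'w \<Rightarrow> 'w \<Rightarrow> 'w \<Rightarrow> 'w \<Rightarrow> 'w \<Rightarrow> 'w mat4" where
  "mk A B C D A' B' C' D' = (\<lambda>i j. case i of
      I1 \<Rightarrow> (case j of I1 \<Rightarrow> A | I3 \<Rightarrow> B | _ \<Rightarrow> 0)
    | I3 \<Rightarrow> (case j of I1 \<Rightarrow> C | I3 \<Rightarrow> D | _ \<Rightarrow> 0)
    | I2 \<Rightarrow> (case j of I2 \<Rightarrow> A' | I4 \<Rightarrow> B' | _ \<Rightarrow> 0)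
    | I4 \<Rightarrow> (case j of I2 \<Rightarrow> C' | I4 \<Rightarrow> D' | _ \<Rightarrow> 0))"

locale wset =
  fixes p :: nat and red :: "'w::comm_ring_1 \<Rightarrow> 'k::field" and \<sigma> :: "'w \<Rightarrow> 'w"
  assumes pr: "prime p" and ac: "alg_closed_field TYPE('k)"
    and wr: "is_witt_ring p red" and wf: "is_witt_frobenius p red \<sigma>"
begin

abbreviation P :: 'w where "P \<equiv> of_nat p"

lemma red_add: "red (x + y) = red x + red y" using wr by (simp add: is_witt_ring_def)
lemma red_mult: "red (x * y) = red x * red y" using wr by (simp add: is_witt_ring_def)
lemma red_one: "red 1 = 1" using wr by (simp add: is_witt_ring_def)
lemma red_surj: "surj red" using wr by (simp add: is_witt_ring_def)
lemma red_zero_iff: "red x = 0 \<longleftrightarrow> P dvd x" using wr by (auto simp add: is_witt_ring_def dvd_def)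
lemma nzd: "P * x = 0 \<Longrightarrow> x = 0" using wr by (simp add: is_witt_ring_def)
lemma sep: "(\<And>n. P ^ n dvd x) \<Longrightarrow> x = 0" using wr by (auto simp add: is_witt_ring_def dvd_def)
lemma complete: "(\<And>n. P ^ n dvd a (Suc n) - a n) \<Longrightarrow> \<exists>l. \<forall>n. P ^ n dvd l - a n"
  using wr unfolding is_witt_ring_def dvd_def by blast

lemma red_zero: "red 0 = 0" using red_add[of 0 0] by (metis add_cancel_right_right add_0)
lemma red_uminus: "red (- x) = - red x"
  using red_add[of x "-x"] red_zero by (simp add: eq_neg_iff_add_eq_0 add.commute)
lemma red_diff: "red (x - y) = red x - red y"
  using red_add[of x "-y"] red_uminus by simp
lemma red_pow: "red (x ^ n) = red x ^ n"
  by (induction n) (simp_all add: red_one red_mult)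
lemma red_P: "red P = 0" using red_zero_iff by simp

lemma sig_add: "\<sigma> (x + y) = \<sigma> x + \<sigma> y" using wf by (simp add: is_witt_frobenius_def)
lemma sig_mult: "\<sigma> (x * y) = \<sigma> x * \<sigma> y" using wf by (simp add: is_witt_frobenius_def)
lemma sig_one: "\<sigma> 1 = 1" using wf by (simp add: is_witt_frobenius_def)
lemma red_sig: "red (\<sigma> x) = red x ^ p" using wf by (simp add: is_witt_frobenius_def)
lemma sig_zero: "\<sigma> 0 = 0" using sig_add[of 0 0] by (metis add_cancel_right_right add_0)
lemma sig_uminus: "\<sigma> (- x) = - \<sigma> x"
  using sig_add[of x "-x"] sig_zero by (simp add: eq_neg_iff_add_eq_0 add.commute)
lemma sig_diff: "\<sigma> (x - y) = \<sigma> x - \<sigma> y"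
  using sig_add[of x "-y"] sig_uminus by simp
lemma sig_pow: "\<sigma> (x ^ n) = \<sigma> x ^ n"
  by (induction n) (simp_all add: sig_one sig_mult)
lemma sig_nat: "\<sigma> (of_nat n) = of_nat n"
  by (induction n) (simp_all add: sig_one sig_add sig_zero)
lemma sig_P: "\<sigma> P = P" by (rule sig_nat)

lemma p2: "p \<ge> 2" using pr prime_ge_2_nat by blast

lemma pow_cong:
  assumes k: "k \<ge> 1" and d: "P ^ k dvd u - v"
  shows "P ^ (k+1) dvd u ^ p - v ^ p"
proof -
  obtain w where u: "u = P^k * w + v" using d unfolding dvd_def by (metis diff_eq_eq add.commute)
  have "u ^ p = (\<Sum>i\<le>p. of_nat (p choose i) * (P^k*w)^i * v^(p-i))"
    unfolding u by (rule binomial_ring)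
  also have "\<dots> = (\<Sum>i\<in>{1..p}. of_nat (p choose i) * (P^k*w)^i * v^(p-i)) + v ^ p"
  proof -
    have "{..p} = insert 0 {1..p}" by auto
    then show ?thesis by (simp add: add.commute)
  qed
  finally have e: "u^p - v^p = (\<Sum>i\<in>{1..p}. of_nat (p choose i) * (P^k*w)^i * v^(p-i))" by simp
  have "P^(k+1) dvd of_nat (p choose i) * (P^k*w)^i * v^(p-i)" if i: "i \<in> {1..p}" for i
  proof (cases "i = 1")
    case True
    then show ?thesis by (intro dvdI[where k="w * v^(p-1)"]) (simp add: mult_ac power_add)
  next
    case False
    with i have "i \<ge> 2" by auto
    then have "k * 2 \<le> k * i" by simp
    then have "k + 1 \<le> k * i" using k by linarith
    then have "P^(k+1) dvd P^(k*i)" by (rule le_imp_power_dvd)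
    also have "P^(k*i) dvd (P^k*w)^i" by (simp add: power_mult_distrib power_mult)
    finally show ?thesis by (simp add: mult.assoc)
  qed
  then show ?thesis unfolding e by (intro dvd_sum) auto
qed

lemma diff_dvd_pow: "(x - y) dvd x ^ m - (y::'w) ^ m"
proof (cases m)
  case 0 then show ?thesis by simp
next
  case (Suc n) then show ?thesis using diff_power_eq_sum[of x n y] by simp
qed

lemma pow_cong_q:
  assumes "k \<ge> 1" "P ^ k dvd u - v"
  shows "P ^ (k+1) dvd u ^ (p^2) - v ^ (p^2)"
proof -
  have "P^(k+1) dvd u^p - v^p" using pow_cong assms by blast
  then have "P^(k+1) dvd (u^p)^p - (v^p)^p" using diff_dvd_pow dvd_trans by blast
  then show ?thesis by (simp add: power_mult[symmetric] power2_eq_square)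
qed

lemma teich_unique:
  assumes s: "s ^ (p^2) = s" and t: "t ^ (p^2) = t" and r: "red s = red t"
  shows "s = t"
proof -
  have "P ^ Suc n dvd s - t" for n
  proof (induction n)
    case 0
    have "red (s - t) = 0" using r red_diff by simp
    then show ?case using red_zero_iff by simp
  next
    case (Suc n)
    then have "P ^ (Suc n + 1) dvd s^(p^2) - t^(p^2)" by (intro pow_cong_q) auto
    then show ?case using s t by simp
  qed
  then have "P ^ n dvd s - t" for n using le_imp_power_dvd[of n "Suc n" P] dvd_trans by (metis le_SucI order_refl)
  then show ?thesis using sep[of "s - t"] by simp
qed

lemma teich_exists:
  assumes a: "a ^ (p^2) = a"
  shows "\<exists>t. t ^ (p^2) = t \<and> red t = a"
proof -
  obtain x where x: "red x = a" using red_surj by (metis surjD)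
  define xs where "xs n = x ^ ((p^2)^n)" for n
  have xsS: "xs (Suc n) = xs n ^ (p^2)" for n by (simp add: xs_def power_mult[symmetric] mult.commute)
  have d: "P ^ Suc n dvd xs (Suc n) - xs n" for n
  proof (induction n)
    case 0
    have "red (x ^ (p^2) - x) = 0" using red_diff red_pow x a by simp
    then show ?case using red_zero_iff by (simp add: xs_def)
  next
    case (Suc n)
    then have "P ^ (Suc n + 1) dvd xs (Suc n)^(p^2) - xs n^(p^2)" by (intro pow_cong_q) auto
    then show ?case by (simp add: xsS)
  qed
  have "P ^ n dvd xs (Suc n) - xs n" for n using d[of n] dvd_trans le_imp_power_dvd by (metis le_SucI order_refl)
  then obtain l where l: "\<And>n. P ^ n dvd l - xs n" using complete[of xs] by blast
  have "P ^ n dvd l ^ (p^2) - l" for n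
  proof -
    have 1: "P ^ n dvd l ^ (p^2) - xs n ^ (p^2)" using l[of n] diff_dvd_pow dvd_trans by blast
    have "P ^ n dvd l - xs (Suc n)" using l[of "Suc n"] dvd_trans le_imp_power_dvd by (metis le_SucI order_refl)
    then have 2: "P ^ n dvd xs (Suc n) - l" by (metis dvd_minus_iff minus_diff_eq)
    have "l ^ (p^2) - l = (l ^ (p^2) - xs n ^ (p^2)) + (xs (Suc n) - l)" by (simp add: xsS)
    then show ?thesis using dvd_add[OF 1 2] by simp
  qed
  then have "l ^ (p^2) = l" using sep[of "l ^ (p^2) - l"] by simp
  moreover have "red l = a"
  proof -
    have "red (l - xs 1) = 0" using l[of 1] red_zero_iff by simp
    then show ?thesis using red_diff red_pow x a by (simp add: xs_def)
  qed
  ultimately show ?thesis by blast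
qed

lemma sig_inj: "inj \<sigma>"
proof (rule injI)
  fix x y assume e: "\<sigma> x = \<sigma> y"
  have "\<forall>z. \<sigma> z = 0 \<longrightarrow> P ^ n dvd z" for n
  proof (induction n)
    case 0 then show ?case by simp
  next
    case (Suc n)
    show ?case
    proof (intro allI impI)
      fix z assume z: "\<sigma> z = 0"
      then have "red z ^ p = 0" using red_sig red_zero by metis
      then have "red z = 0" by simp
      then obtain y where y: "z = P * y" using red_zero_iff by (auto simp: dvd_def)
      then have "P * \<sigma> y = 0" using z sig_mult sig_P by metis
      then have "\<sigma> y = 0" by (rule nzd)
      then have "P ^ n dvd y" using Suc by blast
      then show "P ^ Suc n dvd z" using y by (simp add: mult_dvd_mono)
    qed
  qed
  moreover have "\<sigma> (x - y) = 0" using e sig_diff by simp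
  ultimately have "x - y = 0" using sep by blast
  then show "x = y" by simp
qed

lemma pth_root: "\<exists>e::'k. e ^ p = c"
proof -
  define q :: "'k poly" where "q = monom 1 p + [:-c:]"
  have "degree q = p" unfolding q_def using p2 by (subst degree_add_eq_left) (auto simp: degree_monom_eq)
  then have "degree q \<ge> 1" using p2 by simp
  then obtain x where "poly q x = 0" using ac unfolding alg_closed_field_def by blast
  then have "x ^ p = c" by (simp add: q_def poly_monom)
  then show ?thesis by blast
qed

lemma sig_step: "\<exists>x r. z = \<sigma> x + P * r"
proof -
  obtain e where e: "e ^ p = red z" using pth_root by blast
  obtain x where x: "red x = e" using red_surj by (metis surjD)
  have "red (z - \<sigma> x) = 0" using red_diff red_sig x e by simp
  then obtain r where "z - \<sigma> x = P * r" using red_zero_iff by (auto simp: dvd_def)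
  then have "z = \<sigma> x + P * r" by (simp add: algebra_simps)
  then show ?thesis by blast
qed

lemma sig_surj: "surj \<sigma>"
proof -
  have "\<forall>z. \<exists>xr. z = \<sigma> (fst xr) + P * snd xr" using sig_step by fastforce
  then obtain h where h: "\<And>z. z = \<sigma> (fst (h z)) + P * snd (h z)" by metis
  define f where "f z = fst (h z)" for z
  define g where "g z = snd (h z)" for z
  have fg: "z = \<sigma> (f z) + P * g z" for z using h f_def g_def by simp
  show ?thesis unfolding surj_def
  proof
    fix y
    define zs where "zs = rec_nat y (\<lambda>_ z. g z)"
    have zs0: "zs 0 = y" and zsS: "zs (Suc n) = g (zs n)" for n by (simp_all add: zs_def)
    define ss where "ss n = (\<Sum>i<n. P^i * f (zs i))" for n
    have ssS: "ss (Suc n) = ss n + P^n * f (zs n)" for n by (simp add: ss_def)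
    have inv: "y = \<sigma> (ss n) + P^n * zs n" for n
    proof (induction n)
      case 0 then show ?case by (simp add: ss_def zs0 sig_zero)
    next
      case (Suc n)
      have "\<sigma> (ss (Suc n)) = \<sigma> (ss n) + P^n * \<sigma> (f (zs n))"
        by (simp add: ssS sig_add sig_mult sig_pow sig_P)
      moreover have "P^n * zs n = P^n * \<sigma> (f (zs n)) + P^Suc n * zs (Suc n)"
      proof -
        have "P^n * zs n = P^n * (\<sigma> (f (zs n)) + P * g (zs n))" using fg[of "zs n"] by simp
        then show ?thesis by (simp add: zsS algebra_simps)
      qed
      ultimately show ?case using Suc by (simp add: algebra_simps)
    qed
    have "P ^ n dvd ss (Suc n) - ss n" for n by (simp add: ssS)
    then obtain l where l: "\<And>n. P ^ n dvd l - ss n" using complete[of ss] by blast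
    have "P ^ n dvd \<sigma> l - y" for n
    proof -
      obtain w where w: "l - ss n = P^n * w" using l[of n] by (auto simp: dvd_def)
      have "\<sigma> l - y = \<sigma> (l - ss n) - P^n * zs n" using inv[of n] by (simp add: sig_diff algebra_simps)
      also have "\<dots> = P^n * (\<sigma> w - zs n)" using w by (simp add: sig_mult sig_pow sig_P algebra_simps)
      finally show ?thesis by simp
    qed
    then have "\<sigma> l - y = 0" by (rule sep)
    then show "\<exists>x. y = \<sigma> x" by auto
  qed
qed

lemma sig_bij: "bij \<sigma>" using sig_inj sig_surj by (simp add: bij_def)
lemma inv_sig: "inv \<sigma> (\<sigma> x) = x" using sig_inj by simp
lemma sig_inv: "\<sigma> (inv \<sigma> x) = x" using sig_surj by (simp add: surj_f_inv_f)

lemma inv_add: "inv \<sigma> (x + y) = inv \<sigma> x + inv \<sigma> y"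
  by (metis inv_sig sig_add sig_inv)
lemma inv_mult: "inv \<sigma> (x * y) = inv \<sigma> x * inv \<sigma> y"
  by (metis inv_sig sig_mult sig_inv)
lemma inv_uminus: "inv \<sigma> (- x) = - inv \<sigma> x"
  by (metis inv_sig sig_uminus sig_inv)
lemma inv_zero: "inv \<sigma> 0 = 0"
  by (metis inv_sig sig_zero)

lemma build:
  assumes fA: "\<sigma> (\<sigma> A) = A" and fB: "\<sigma> (\<sigma> B) = B" and fC: "\<sigma> (\<sigma> C) = C" and fD: "\<sigma> (\<sigma> D) = D"
    and det: "A * D - B * C = 1"
  shows "\<exists>M \<in> U_grp p \<sigma>. pi_has_matrix p \<sigma> red M (red A) (red B) (red C) (red D)"
proof -
  define M where "M = mk A B C D (\<sigma> A) (\<sigma> B) (\<sigma> C) (\<sigma> D)"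
  define M' where "M' = mk D (-B) (-C) A (\<sigma> D) (- \<sigma> B) (- \<sigma> C) (\<sigma> A)"
  have det2: "\<sigma> A * \<sigma> D - \<sigma> B * \<sigma> C = 1"
    using det by (metis sig_diff sig_mult sig_one)
  have det': "D * A - C * B = 1" "\<sigma> D * \<sigma> A - \<sigma> C * \<sigma> B = 1"
    using det det2 by (simp_all add: mult.commute)
  have inv1: "mat_mul M M' = mat_id"
    unfolding mat_mul_def mat_id_def M_def M'_def mk_def
    apply (rule ext)+
    subgoal for i k by (cases i; cases k) (simp_all add: det det2 det' algebra_simps)
    done
  have inv2: "mat_mul M' M = mat_id"
    unfolding mat_mul_def mat_id_def M_def M'_def mk_def
    apply (rule ext)+
    subgoal for i k by (cases i; cases k) (simp_all add: det det2 det' algebra_simps)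
    done
  have F: "mat_vec M (frobF p \<sigma> x) = frobF p \<sigma> (mat_vec M x)" for x
    unfolding mat_vec_def frobF_def M_def mk_def
    apply (rule ext)
    subgoal for i by (cases i) (simp_all add: sig_add sig_mult sig_uminus sig_P sig_zero fA fB fC fD algebra_simps)
    done
  have iA: "inv \<sigma> A = \<sigma> A" using inv_sig[of "\<sigma> A"] fA by simp
  have iB: "inv \<sigma> B = \<sigma> B" using inv_sig[of "\<sigma> B"] fB by simp
  have iC: "inv \<sigma> C = \<sigma> C" using inv_sig[of "\<sigma> C"] fC by simp
  have iD: "inv \<sigma> D = \<sigma> D" using inv_sig[of "\<sigma> D"] fD by simp
  have V: "mat_vec M (verV p \<sigma> x) = verV p \<sigma> (mat_vec M x)" for x
    unfolding mat_vec_def verV_def M_def mk_def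
    apply (rule ext)
    subgoal for i using iA iB iC iD by (cases i) (simp_all add: inv_add inv_mult inv_uminus inv_zero inv_sig algebra_simps)
    done
  have pair: "pairN p (mat_vec M x) (mat_vec M y) = pairN p x y" for x y
  proof -
    have "pairN p (mat_vec M x) (mat_vec M y) =
      (A * D - B * C) * (x I1 * y I3 - x I3 * y I1) + P * ((\<sigma> A * \<sigma> D - \<sigma> B * \<sigma> C) * (x I2 * y I4 - x I4 * y I2))"
      unfolding pairN_def mat_vec_def M_def mk_def by (simp add: algebra_simps)
    then show ?thesis using det det2 by (simp add: pairN_def)
  qed
  have MU: "M \<in> U_grp p \<sigma>" unfolding U_grp_def using inv1 inv2 F V pair by blast
  have zN: "(\<lambda>i. 0) \<in> Ntilde p \<sigma>" unfolding Ntilde_def frobF_def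
    by (auto intro!: ext split: idx.split simp: sig_zero)
  have zV: "(\<lambda>i. 0) \<in> VNtilde p \<sigma>" unfolding VNtilde_def
  proof
    show "(\<lambda>i. 0) = verV p \<sigma> (\<lambda>i. 0)" unfolding verV_def by (auto intro!: ext split: idx.split simp: inv_zero)
  qed (rule zN)
  define c1 :: "'w vec4" where "c1 = (\<lambda>i. case i of I1 \<Rightarrow> A | I3 \<Rightarrow> C | _ \<Rightarrow> 0)"
  define c3 :: "'w vec4" where "c3 = (\<lambda>i. case i of I1 \<Rightarrow> B | I3 \<Rightarrow> D | _ \<Rightarrow> 0)"
  have col1: "mat_vec M (basis_vec I1) = c1"
    unfolding c1_def mat_vec_def M_def mk_def basis_vec_def by (auto intro!: ext split: idx.split)
  have col3: "mat_vec M (basis_vec I3) = c3"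
    unfolding c3_def mat_vec_def M_def mk_def basis_vec_def by (auto intro!: ext split: idx.split)
  have N1: "c1 \<in> Ntilde p \<sigma>"
    unfolding c1_def Ntilde_def frobF_def by (auto intro!: ext split: idx.split simp: sig_zero fA fC)
  have N3: "c3 \<in> Ntilde p \<sigma>"
    unfolding c3_def Ntilde_def frobF_def by (auto intro!: ext split: idx.split simp: sig_zero fB fD)
  have vz: "vsub y y = (\<lambda>i. 0)" for y :: "'w vec4" by (simp add: vsub_def)
  have r1: "red (c1 I1) = red A" "red (c1 I3) = red C" "red (c3 I1) = red B" "red (c3 I3) = red D"
    by (simp_all add: c1_def c3_def)
  have "pi_has_matrix p \<sigma> red M (red A) (red B) (red C) (red D)"
    unfolding pi_has_matrix_def col1 col3
    using N1 N3 zV r1 vz[of c1] vz[of c3] by metis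
  then show ?thesis using MU by blast
qed

definition T :: "'k \<Rightarrow> 'w" where "T x = (SOME t. t ^ (p^2) = t \<and> red t = x)"

lemma teich: "x ^ (p^2) = x \<Longrightarrow> T x ^ (p^2) = T x \<and> red (T x) = x"
  unfolding T_def by (rule someI_ex) (rule teich_exists)

lemma teich_fix: assumes "x ^ (p^2) = x" shows "\<sigma> (\<sigma> (T x)) = T x"
proof (rule teich_unique)
  show "\<sigma> (\<sigma> (T x)) ^ (p^2) = \<sigma> (\<sigma> (T x))" using teich[OF assms] by (metis sig_pow)
  show "T x ^ (p^2) = T x" using teich[OF assms] by simp
  have "red (\<sigma> (\<sigma> (T x))) = x ^ (p * p)" using teich[OF assms] by (simp add: red_sig power_mult)
  then show "red (\<sigma> (\<sigma> (T x))) = red (T x)" using teich[OF assms] assms by (simp add: power2_eq_square)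
qed

lemma teich_inv: assumes "x ^ (p^2) = x" "x \<noteq> 0" shows "T x * T (inverse x) = 1"
proof -
  have ix: "inverse x ^ (p^2) = inverse x" using assms(1) by (metis power_inverse)
  show ?thesis
  proof (rule teich_unique)
    show "(T x * T (inverse x)) ^ (p^2) = T x * T (inverse x)"
      using teich[OF assms(1)] teich[OF ix] by (simp add: power_mult_distrib)
    show "(1::'w) ^ (p^2) = 1" by simp
    show "red (T x * T (inverse x)) = red 1"
      using teich[OF assms(1)] teich[OF ix] assms(2) by (simp add: red_mult red_one)
  qed
qed

lemma lifts:
  assumes a: "a ^ (p^2) = a" and b: "b ^ (p^2) = b" and c: "c ^ (p^2) = c" and d: "d ^ (p^2) = d"
    and det: "a * d - b * c = 1"
  shows "\<exists>A B C D. \<sigma> (\<sigma> A) = A \<and> \<sigma> (\<sigma> B) = B \<and> \<sigma> (\<sigma> C) = C \<and> \<sigma> (\<sigma> D) = D \<and>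
     A * D - B * C = 1 \<and> red A = a \<and> red B = b \<and> red C = c \<and> red D = d"
proof (cases "a = 0")
  case False
  have ia: "inverse a ^ (p^2) = inverse a" using a by (metis power_inverse)
  define D where "D = T (inverse a) * (1 + T b * T c)"
  have "\<sigma> (\<sigma> D) = D" unfolding D_def using teich_fix[OF ia] teich_fix[OF b] teich_fix[OF c]
    by (simp add: sig_mult sig_add sig_one)
  moreover have "T a * D - T b * T c = 1"
  proof -
    have "T a * D = (T a * T (inverse a)) * (1 + T b * T c)" by (simp add: D_def mult.assoc)
    then show ?thesis using teich_inv[OF a False] by simp
  qed
  moreover have "red D = d"
  proof -
    have "red D = inverse a * (1 + b * c)" unfolding D_def
      using teich[OF ia] teich[OF b] teich[OF c] by (simp add: red_mult red_add red_one)
    also have "\<dots> = d" using det False by (simp add: field_simps)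
    finally show ?thesis .
  qed
  ultimately show ?thesis using teich_fix[OF a] teich_fix[OF b] teich_fix[OF c] teich[OF a] teich[OF b] teich[OF c] by blast
next
  case True
  then have bc: "b * c = -1" using det by (simp add: algebra_simps) (metis minus_minus)
  then have b0: "b \<noteq> 0" by auto
  have ib: "inverse b ^ (p^2) = inverse b" using b by (metis power_inverse)
  define C where "C = T (inverse b) * (T a * T d - 1)"
  have "\<sigma> (\<sigma> C) = C" unfolding C_def using teich_fix[OF ib] teich_fix[OF a] teich_fix[OF d]
    by (simp add: sig_mult sig_diff sig_one)
  moreover have "T a * T d - T b * C = 1"
  proof -
    have "T b * C = (T b * T (inverse b)) * (T a * T d - 1)" by (simp add: C_def mult.assoc)
    then show ?thesis using teich_inv[OF b b0] by simp
  qed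
  moreover have "red C = c"
  proof -
    have "red C = inverse b * (a * d - 1)" unfolding C_def
      using teich[OF ib] teich[OF a] teich[OF d] by (simp add: red_mult red_diff red_one)
    also have "\<dots> = c" using True bc b0 by (simp add: field_simps)
    finally show ?thesis .
  qed
  ultimately show ?thesis using teich_fix[OF a] teich_fix[OF b] teich_fix[OF d] teich[OF a] teich[OF b] teich[OF d] by blast
qed

end

theorem proposition4p1:
  fixes p :: nat
    and red :: "'w::comm_ring_1 \<Rightarrow> 'k::field"
    and \<sigma> :: "'w \<Rightarrow> 'w"
  assumes "prime p"
    and "CHAR('k) = p"
    and "alg_closed_field TYPE('k)"
    and "is_witt_ring p red"
    and "is_witt_frobenius p red \<sigma>"
  shows "\<forall>a b c d. aut_V0 p a b c d \<longrightarrow>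
           (\<exists>M \<in> U_grp p \<sigma>. pi_has_matrix p \<sigma> red M a b c d)"
proof (intro allI impI)
  fix a b c d :: 'k
  assume au: "aut_V0 p a b c d"
  interpret W: wset p red \<sigma> using assms by unfold_locales
  have p0: "p^2 \<noteq> 0" using assms(1) by (simp add: prime_gt_0_nat)
  have f0: "(0::'k) \<in> Fp2 p" and f1: "(1::'k) \<in> Fp2 p" using p0 by (simp_all add: Fp2_def)
  from au have ab: "a \<in> Fp2 p" "b \<in> Fp2 p" "c \<in> Fp2 p" "d \<in> Fp2 p" by (simp_all add: aut_V0_def)
  from au have "(a * 1 + b * 0) * (c * 0 + d * 1) - (c * 1 + d * 0) * (a * 0 + b * 1) = 1 * 1 - 0 * 0"
    unfolding aut_V0_def using f0 f1 by blast
  then have det: "a * d - b * c = 1" by (simp add: mult.commute)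
  obtain A B C D where L: "\<sigma> (\<sigma> A) = A" "\<sigma> (\<sigma> B) = B" "\<sigma> (\<sigma> C) = C" "\<sigma> (\<sigma> D) = D"
     "A * D - B * C = 1" "red A = a" "red B = b" "red C = c" "red D = d"
    using W.lifts[of a b c d] ab det unfolding Fp2_def by auto
  show "\<exists>M \<in> U_grp p \<sigma>. pi_has_matrix p \<sigma> red M a b c d"
    using W.build[OF L(1-5)] L(6-9) by simp
qed

end
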